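(* Let $p>2$ be a prime, $q=p^h$, and let $\mathcal{F}$ be the projective closure of $ax^ny^m+x^n+y^m=1$ over $\mathbb{F}_q$, where $a\in\mathbb{F}_q$, $a\neq0$, $a\neq-1$. Then for all positive integers $m,n$ with $p\nmid mn$, $\mathcal{F}$ is classical with respect to lines.
   Context: With $\varphi=(1,x,y)$, $\tau$ a separating element of the function field and $D^{(k)}_\tau$ Hasse derivatives, the order sequence w.r.t. lines is the lexicographically smallest $\varepsilon_0<\varepsilon_1<\varepsilon_2$ with $\det(D^{(\varepsilon_i)}_\tau\varphi_j)\neq0$; the curve is classical w.r.t. lines if this sequence is $(0,1,2)$. *)

theory Defs
  imports "HOL-Computational_Algebra.Polynomial" "HOL-Library.Product_Lexorder"
begin

inductive_set gen_field :: "'a::field set \<Rightarrow> 'a set" for S where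
  base: "s \<in> S \<Longrightarrow> s \<in> gen_field S"
| zero: "0 \<in> gen_field S"
| one: "1 \<in> gen_field S"
| add: "u \<in> gen_field S \<Longrightarrow> v \<in> gen_field S \<Longrightarrow> u + v \<in> gen_field S"
| neg: "u \<in> gen_field S \<Longrightarrow> - u \<in> gen_field S"
| mult: "u \<in> gen_field S \<Longrightarrow> v \<in> gen_field S \<Longrightarrow> u * v \<in> gen_field S"
| inv: "u \<in> gen_field S \<Longrightarrow> inverse u \<in> gen_field S"

definition field_emb :: "('k::field \<Rightarrow> 'L::field) \<Rightarrow> bool" where
  "field_emb \<iota> \<longleftrightarrow> \<iota> 1 = 1 \<and> (\<forall>u v. \<iota> (u + v) = \<iota> u + \<iota> v) \<and> (\<forall>u v. \<iota> (u * v) = \<iota> u * \<iota> v)"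

text \<open>Hasse derivatives D k = D^(k)_tau on L (over the constants range iota), with respect to tau.\<close>
definition hasse_derivs :: "('k::field \<Rightarrow> 'L::field) \<Rightarrow> 'L \<Rightarrow> (nat \<Rightarrow> 'L \<Rightarrow> 'L) \<Rightarrow> bool" where
  "hasse_derivs \<iota> \<tau> D \<longleftrightarrow>
     (\<forall>u. D 0 u = u) \<and>
     (\<forall>k u v. D k (u + v) = D k u + D k v) \<and>
     (\<forall>k u v. D k (u * v) = (\<Sum>i\<le>k. D i u * D (k - i) v)) \<and>
     (\<forall>k c. k > 0 \<longrightarrow> D k (\<iota> c) = 0) \<and>
     (\<forall>i j u. D i (D j u) = of_nat ((i + j) choose i) * D (i + j) u) \<and>
     D 1 \<tau> = 1 \<and> (\<forall>k\<ge>2. D k \<tau> = 0)"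

definition det3 :: "(nat \<Rightarrow> nat \<Rightarrow> 'a::comm_ring_1) \<Rightarrow> 'a" where
  "det3 M = M 0 0 * M 1 1 * M 2 2 + M 0 1 * M 1 2 * M 2 0 + M 0 2 * M 1 0 * M 2 1
          - M 0 2 * M 1 1 * M 2 0 - M 0 0 * M 1 2 * M 2 1 - M 0 1 * M 1 0 * M 2 2"

definition line_wronskian :: "(nat \<Rightarrow> 'L::field \<Rightarrow> 'L) \<Rightarrow> 'L \<Rightarrow> 'L \<Rightarrow> nat \<times> nat \<times> nat \<Rightarrow> 'L" where
  "line_wronskian D x y e =
     (case e of (e0, e1, e2) \<Rightarrow>
       det3 (\<lambda>i j. D ([e0, e1, e2] ! i) ([1, x, y] ! j)))"

definition line_order_seq :: "(nat \<Rightarrow> 'L::field \<Rightarrow> 'L) \<Rightarrow> 'L \<Rightarrow> 'L \<Rightarrow> nat \<times> nat \<times> nat" where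
  "line_order_seq D x y =
     (LEAST e. (case e of (e0, e1, e2) \<Rightarrow> e0 < e1 \<and> e1 < e2) \<and> line_wronskian D x y e \<noteq> 0)"

definition classical_wrt_lines :: "(nat \<Rightarrow> 'L::field \<Rightarrow> 'L) \<Rightarrow> 'L \<Rightarrow> 'L \<Rightarrow> bool" where
  "classical_wrt_lines D x y \<longleftrightarrow> line_order_seq D x y = (0, 1, 2)"

end

theory Submission imports Defs "HOL-Number_Theory.Residues"
begin

lemma hd_basic:
  assumes H: "hasse_derivs \<iota> \<tau> D" and E: "field_emb \<iota>"
  shows "D 0 u = u" "D 1 (u + v) = D 1 u + D 1 v"
    "D 1 (u * v) = u * D 1 v + D 1 u * v" "D 1 (\<iota> c) = 0"
    "D 1 (D 1 u) = 2 * D 2 u" "D 1 \<tau> = 1" "D 1 1 = 0" "D 2 1 = 0"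
proof -
  have p: "\<And>k u v. D k (u * v) = (\<Sum>i\<le>k. D i u * D (k - i) v)" and z: "\<And>u. D 0 u = u"
    and c: "\<And>k c. k > 0 \<Longrightarrow> D k (\<iota> c) = 0"
    and it: "\<And>i j u. D i (D j u) = of_nat ((i + j) choose i) * D (i + j) u"
    using H unfolding hasse_derivs_def by blast+
  show "D 0 u = u" by (rule z)
  show "D 1 (u + v) = D 1 u + D 1 v" using H unfolding hasse_derivs_def by blast
  show "D 1 (u * v) = u * D 1 v + D 1 u * v" using p[of 1 u v] z by (simp add: atMost_Suc)
  show "D 1 (\<iota> c) = 0" using c by simp
  have "D 1 (D 1 u) = of_nat (2 choose 1) * D 2 u" using it[of 1 1 u] by (simp only: one_add_one)
  then show "D 1 (D 1 u) = 2 * D 2 u" by simp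
  show "D 1 \<tau> = 1" using H unfolding hasse_derivs_def by blast
  have "\<iota> 1 = 1" using E unfolding field_emb_def by blast
  then show "D 1 1 = 0" "D 2 1 = 0" using c[of 1 1] c[of 2 1] by auto
qed

lemma char_k:
  fixes p h j :: nat
  assumes "prime p" "card (UNIV :: 'k::{field,finite} set) = p ^ h"
    and "of_nat j = (0::'k)"
  shows "p dvd j"
proof -
  have pos: "CHAR('k) > 0" by (rule finite_imp_CHAR_pos) simp
  have pr: "prime CHAR('k)" using prime_CHAR_semidom[OF pos] .
  have "CHAR('k) dvd p ^ h" using CHAR_dvd_CARD[where 'a='k] assms(2) by simp
  then have "CHAR('k) dvd p" using pr prime_dvd_power by blast
  then have "CHAR('k) = p" using pr assms(1) primes_dvd_imp_eq by blast
  then show ?thesis using assms(3) of_nat_eq_0_iff_char_dvd by metis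
qed

lemma map_poly_add_hom:
  assumes "f 0 = 0" "\<And>a b. f (a + b) = f a + f b"
  shows "map_poly f (p + q) = map_poly f p + map_poly f q"
  by (rule poly_eqI) (simp add: coeff_map_poly assms)

lemma trinom:
  fixes \<iota> :: "'k::field \<Rightarrow> 'L::field"
  assumes i0: "\<iota> 0 = 0" and ia: "\<And>a b. \<iota> (a + b) = \<iota> a + \<iota> b"
    and T: "\<forall>g :: 'k poly. g \<noteq> 0 \<longrightarrow> poly (map_poly \<iota> g) x \<noteq> 0"
    and n: "n > 0" and c: "c0 \<noteq> 0 \<or> c1 \<noteq> 0 \<or> c2 \<noteq> 0"
  shows "\<iota> c0 + \<iota> c1 * x ^ n + \<iota> c2 * x ^ (2 * n) \<noteq> 0"
proof -
  define g where "g = Polynomial.monom c0 0 + Polynomial.monom c1 n + Polynomial.monom c2 (2 * n)"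
  have "Polynomial.coeff g 0 = c0" "Polynomial.coeff g n = c1" "Polynomial.coeff g (2*n) = c2" using n by (auto simp: g_def)
  then have "g \<noteq> 0" using c by auto
  then have "poly (map_poly \<iota> g) x \<noteq> 0" using T by blast
  moreover have "map_poly \<iota> g = Polynomial.monom (\<iota> c0) 0 + Polynomial.monom (\<iota> c1) n + Polynomial.monom (\<iota> c2) (2 * n)"
    unfolding g_def by (simp add: map_poly_add_hom[of \<iota>, OF i0 ia] map_poly_monom[of \<iota>, OF i0])
  ultimately show ?thesis by (simp add: poly_monom)
qed

lemma kill_all:
  assumes H: "hasse_derivs \<iota> \<tau> D" and E: "field_emb \<iota>"
    and dx: "D 1 x = 0" and dy: "D 1 y = 0"
    and z: "z \<in> gen_field (range \<iota> \<union> {x, y})"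
  shows "D 1 z = 0"
  using z
proof (induction rule: gen_field.induct)
  case (base s)
  then show ?case using dx dy hd_basic(4)[OF H E] by auto
next
  case zero
  have "D 1 (0 + 0) = D 1 0 + D 1 0" using hd_basic(2)[OF H E] .
  then show ?case by (metis add_cancel_left_right add_0)
next
  case one
  then show ?case using hd_basic(7)[OF H E] .
next
  case (add u v)
  then show ?case using hd_basic(2)[OF H E] by simp
next
  case (neg u)
  have "D 1 (u + - u) = D 1 u + D 1 (- u)" using hd_basic(2)[OF H E] .
  moreover have "D 1 (0 + 0) = D 1 0 + D 1 0" using hd_basic(2)[OF H E] .
  ultimately show ?case using neg by simp
next
  case (mult u v)
  then show ?case using hd_basic(3)[OF H E] by simp
next
  case (inv u)
  show ?case
  proof (cases "u = 0")
    case True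
    have "D 1 (0 + 0) = D 1 0 + D 1 0" using hd_basic(2)[OF H E] .
    then show ?thesis using True by (metis add_cancel_left_right add_0 inverse_zero)
  next
    case False
    have "D 1 (u * inverse u) = u * D 1 (inverse u) + D 1 u * inverse u" using hd_basic(3)[OF H E] .
    then have "u * D 1 (inverse u) = 0" using False inv hd_basic(7)[OF H E] by simp
    then show ?thesis using False by simp
  qed
qed

lemma d_pow:
  assumes H: "hasse_derivs \<iota> \<tau> D" and E: "field_emb \<iota>"
  shows "D 1 (z ^ Suc k) = of_nat (Suc k) * z ^ k * D 1 z"
proof (induction k)
  case 0
  then show ?case by simp
next
  case (Suc k)
  have "D 1 (z ^ Suc (Suc k)) = D 1 (z * z ^ Suc k)" by simp
  also have "\<dots> = z * D 1 (z ^ Suc k) + D 1 z * z ^ Suc k" using hd_basic(3)[OF H E] .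
  also have "\<dots> = of_nat (Suc (Suc k)) * z ^ Suc k * D 1 z" using Suc by (simp add: algebra_simps)
  finally show ?case .
qed

lemma d_minus:
  assumes H: "hasse_derivs \<iota> \<tau> D" and E: "field_emb \<iota>"
  shows "D 1 (- u) = - D 1 u" "D 1 (u - v) = D 1 u - D 1 v"
proof -
  have g: "D 1 (- w) = - D 1 w" for w
  proof -
  have "D 1 (w + - w) = D 1 w + D 1 (- w)" using hd_basic(2)[OF H E] .
  moreover have "D 1 (0 + 0) = D 1 0 + D 1 0" using hd_basic(2)[OF H E] .
  ultimately show "D 1 (- w) = - D 1 w" by (metis add_cancel_left_right add_0 eq_neg_iff_add_eq_0 right_minus)
  qed
  show "D 1 (- u) = - D 1 u" by (rule g)
  show "D 1 (u - v) = D 1 u - D 1 v" using hd_basic(2)[OF H E, of u "- v"] g[of v] by simp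
qed

theorem proposition4p1:
  fixes p h m n :: nat and a :: "'k::{field,finite}"
    and \<iota> :: "'k \<Rightarrow> 'L::field" and x y \<tau> :: 'L and D :: "nat \<Rightarrow> 'L \<Rightarrow> 'L"
  assumes "prime p" and "p > 2" and "h > 0" and "card (UNIV :: 'k set) = p ^ h"
    and "a \<noteq> 0" and "a \<noteq> -1"
    and "m > 0" and "n > 0" and "\<not> p dvd m * n"
    and "field_emb \<iota>"
    and "\<forall>g :: 'k poly. g \<noteq> 0 \<longrightarrow> poly (map_poly \<iota> g) x \<noteq> 0"
    and "\<iota> a * x ^ n * y ^ m + x ^ n + y ^ m = 1"
    and "gen_field (range \<iota> \<union> {x, y}) = UNIV"
    and "hasse_derivs \<iota> \<tau> D"
  shows "classical_wrt_lines D x y"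
proof -
  note H = assms(14) and E = assms(10) and T = assms(11)
  note B = hd_basic[OF H E]
  note dm = d_minus[OF H E]
  have ia: "\<And>u v. \<iota> (u + v) = \<iota> u + \<iota> v" and im: "\<And>u v. \<iota> (u * v) = \<iota> u * \<iota> v"
    and i1: "\<iota> 1 = 1" using E unfolding field_emb_def by blast+
  have i0: "\<iota> 0 = 0" using ia[of 0 0] by (metis add_cancel_left_right add_0)
  have ineg: "\<iota> (- c) = - \<iota> c" for c using ia[of c "- c"] i0 by (simp add: eq_neg_iff_add_eq_0 add.commute)
  have isub: "\<iota> (b - c) = \<iota> b - \<iota> c" for b c using ia[of b "- c"] ineg[of c] by simp
  have inat: "\<iota> (of_nat j) = of_nat j" for j by (induction j) (simp_all add: i0 i1 ia)
  have inz: "c = 0" if "\<iota> c = 0" for c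
  proof (rule ccontr)
    assume "c \<noteq> 0"
    then have "\<iota> c * \<iota> (inverse c) = 1" using im[of c "inverse c"] i1 by simp
    then show False using that by simp
  qed
  have Lnat: "p dvd j" if "(of_nat j :: 'L) = 0" for j
  proof -
    have "\<iota> (of_nat j) = 0" using that inat by simp
    then have "(of_nat j :: 'k) = 0" by (rule inz)
    then show ?thesis using char_k[OF assms(1) assms(4)] by blast
  qed
  have knat: "p dvd j" if "(of_nat j :: 'k) = 0" for j
    using char_k[OF assms(1) assms(4)] that by blast
  have pm: "\<not> p dvd m" and pn: "\<not> p dvd n" using assms(9) by auto
  have p2: "\<not> p dvd 2" using assms(2) by (metis dvd_imp_le le_antisym less_imp_le_nat nat_less_le zero_less_numeral)
  have mL: "(of_nat m :: 'L) \<noteq> 0" using Lnat pm by blast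
  have nL: "(of_nat n :: 'L) \<noteq> 0" using Lnat pn by blast
  have twoL: "(2 :: 'L) \<noteq> 0" using Lnat[of 2] p2 by auto
  have tri: "\<iota> c0 + \<iota> c1 * x ^ n + \<iota> c2 * x ^ (2 * n) \<noteq> 0" if "c0 \<noteq> 0 \<or> c1 \<noteq> 0 \<or> c2 \<noteq> 0" for c0 c1 c2
    using trinom[of \<iota> x n c0 c1 c2, OF i0 ia T assms(8) that] .
  define A where "A = \<iota> a"
  define X where "X = x ^ n"
  define Y where "Y = y ^ m"
  define e where "e = x ^ (n - 1)"
  define f where "f = y ^ (m - 1)"
  define u where "u = D 1 x"
  define v where "v = D 1 y"
  have R: "A * X * Y + X + Y = 1" using assms(12) by (simp add: A_def X_def Y_def)
  have Xnz: "X \<noteq> 0" using tri[of 0 1 0] by (simp add: i0 i1 X_def)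
  have xnz: "x \<noteq> 0" using Xnz assms(8) by (simp add: X_def)
  have AX: "1 + A * X \<noteq> 0" using tri[of 1 a 0] assms(5) by (simp add: i0 i1 X_def A_def)
  have ynz: "y \<noteq> 0"
  proof
    assume "y = 0"
    then have "Y = 0" using assms(7) by (simp add: Y_def)
    then have "\<iota> (- 1) + \<iota> 1 * x ^ n + \<iota> 0 * x ^ (2 * n) = 0" using R by (simp add: ineg i1 i0 X_def)
    then show False using tri[of "-1" 1 0] by simp
  qed
  have Ynz: "Y \<noteq> 0" using ynz by (simp add: Y_def)
  have A1: "1 + A \<noteq> 0"
  proof
    assume "1 + A = 0"
    then have "\<iota> (1 + a) = 0" using ia i1 by (simp add: A_def)
    then have "1 + a = 0" by (rule inz)
    then show False using assms(6) by (simp add: add_eq_0_iff)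
  qed
  have Xe: "X = x * e" using assms(8) by (simp add: X_def e_def power_eq_if)
  have Yf: "Y = y * f" using assms(7) by (simp add: Y_def f_def power_eq_if)
  have fnz: "f \<noteq> 0" using ynz by (simp add: f_def)
  have enz: "e \<noteq> 0" using xnz by (simp add: e_def)
  have dX: "D 1 X = of_nat n * e * u"
    using d_pow[OF H E, of x "n - 1"] assms(8) by (simp add: X_def e_def u_def)
  have dY: "D 1 Y = of_nat m * f * v"
    using d_pow[OF H E, of y "m - 1"] assms(7) by (simp add: Y_def f_def v_def)
  have de: "x * D 1 e = of_nat (n - 1) * e * u"
  proof (cases "n = 1")
    case True
    then show ?thesis using B(7) by (simp add: e_def)
  next
    case False
    then have "n - 1 = Suc (n - 2)" using assms(8) by simp
    then have "D 1 e = of_nat (n - 1) * x ^ (n - 2) * u"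
      using d_pow[OF H E, of x "n - 2"] by (simp add: e_def u_def)
    moreover have "x * x ^ (n - 2) = e" using \<open>n - 1 = Suc (n - 2)\<close> by (simp add: e_def)
    ultimately show ?thesis by (simp add: algebra_simps)
  qed
  have dA: "D 1 (A * w) = A * D 1 w" for w using B(3)[of A w] B(4)[of a] by (simp add: A_def)
  have dR: "A * (D 1 X * Y + X * D 1 Y) + D 1 X + D 1 Y = 0"
  proof -
    have "D 1 (A * X * Y + X + Y) = D 1 1" using R by simp
    moreover have "D 1 A = 0" using B(4) by (simp add: A_def)
    ultimately show ?thesis using B by (simp add: algebra_simps)
  qed
  have unz: "u \<noteq> 0"
  proof
    assume u0: "u = 0"
    then have "(1 + A * X) * D 1 Y = 0" using dR dX by (simp add: algebra_simps)
    then have "D 1 Y = 0" using AX by simp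
    then have "v = 0" using dY mL fnz by simp
    then have "D 1 z = 0" for z using kill_all[OF H E, of x y z] u0 assms(13) by (simp add: u_def v_def)
    then show False using B(6) by simp
  qed

  define cc where "cc = of_nat n * (1 + a) / (of_nat m :: 'k)"
  define C where "C = \<iota> cc"
  have mk: "(of_nat m :: 'k) \<noteq> 0" using knat pm by blast
  have Cm: "C * of_nat m = of_nat n * (1 + A)"
  proof -
    have "\<iota> (cc * of_nat m) = \<iota> (of_nat n * (1 + a))" using mk by (simp add: cc_def)
    then show ?thesis using im ia i1 inat by (simp add: C_def A_def)
  qed
  have Cnz: "C \<noteq> 0" using Cm nL A1 by auto
  have dC: "D 1 (C * w) = C * D 1 w" for w using B(3)[of C w] B(4)[of cc] by (simp add: C_def)
  define P where "P = (1 - X) * (1 + A * X)"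
  have RY: "(1 + A * X) * Y = 1 - X" using R by (simp add: algebra_simps)
  have X1: "1 - X \<noteq> 0" using RY AX Ynz by (metis no_zero_divisors)
  have Pnz: "P \<noteq> 0" using X1 AX by (simp add: P_def)
  define G where "G = - C * e / P"
  have GP: "G * P = - C * e" using Pnz by (simp add: G_def)
  have S0: "of_nat m * Y * v * (1 + A * X) = - of_nat n * e * u * y * (1 + A * Y)"
  proof -
    have "y * (A * (D 1 X * Y + X * D 1 Y) + D 1 X + D 1 Y) = 0" using dR by simp
    then show ?thesis unfolding dX dY using Yf by (simp add: algebra_simps eq_neg_iff_add_eq_0)
  qed
  have S1': "of_nat m * v * P = - of_nat n * (1 + A) * e * u * y"
  proof -
    have "(1 + A * Y) * (1 + A * X) = 1 + A * (A * X * Y + X + Y)" by (simp add: algebra_simps)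
    then have "(1 + A * Y) * (1 + A * X) = 1 + A" using R by simp
    have "of_nat m * v * P = (of_nat m * Y * v * (1 + A * X)) * (1 + A * X)"
      unfolding P_def RY[symmetric] by (simp add: algebra_simps)
    also have "\<dots> = - of_nat n * e * u * y * ((1 + A * Y) * (1 + A * X))" using S0 by simp
    also have "\<dots> = - of_nat n * (1 + A) * e * u * y"
      using \<open>(1 + A * Y) * (1 + A * X) = 1 + A\<close> by simp
    finally show ?thesis .
  qed
  have S1: "v = y * G * u"
  proof -
    have "of_nat m * (- C * e * u * y) = - (C * of_nat m) * e * u * y" by (simp add: algebra_simps)
    also have "\<dots> = - (of_nat n * (1 + A)) * e * u * y" using Cm by simp
    also have "\<dots> = of_nat m * (v * P)" using S1' by (simp add: algebra_simps)
    finally have "of_nat m * (v * P) = of_nat m * (- C * e * u * y)" by simp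
    then have "v * P = - C * e * u * y" using mult_left_cancel[OF mL, of "v * P" "- C * e * u * y"] by blast
    then show ?thesis using Pnz by (simp add: G_def field_simps)
  qed
  have dP: "D 1 P = of_nat n * e * u * ((A - 1) - 2 * A * X)"
  proof -
    have a1: "D 1 (1 + A * X) = A * D 1 X" using B(2) B(7) dA[of X] by simp
    have a2: "D 1 (1 - X) = - D 1 X" using dm(2)[of 1 X] B(7) by simp
    have "D 1 P = (1 - X) * D 1 (1 + A * X) + D 1 (1 - X) * (1 + A * X)" unfolding P_def by (rule B(3))
    then show ?thesis unfolding a1 a2 dX by (simp add: algebra_simps)
  qed
  have dG: "D 1 G * P + G * D 1 P = - C * D 1 e"
  proof -
    have "D 1 (G * P) = D 1 (- (C * e))" using GP by simp
    then show ?thesis using B dm B(4)[of cc] by (simp add: algebra_simps C_def)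
  qed
  define W where "W = u * D 1 v - v * D 1 u"
  have S4: "W = y * u ^ 2 * (G ^ 2 * u + D 1 G)"
  proof -
    have "D 1 v = D 1 (y * G * u)" using S1 by simp
    also have "\<dots> = y * G * D 1 u + (y * D 1 G + v * G) * u" using B by (simp add: v_def)
    finally have "D 1 v = y * G * D 1 u + (y * D 1 G + v * G) * u" .
    then show ?thesis unfolding W_def using S1 by (simp add: algebra_simps power2_eq_square)
  qed
  define Q where "Q = - of_nat (n - 1) + (C + A - 1) * X - A * of_nat (n + 1) * X ^ 2"
  have S5: "x * P ^ 2 * (G ^ 2 * u + D 1 G) = C * e * u * Q"
  proof -
    have "x * P ^ 2 * (G ^ 2 * u + D 1 G) = x * (G * P) ^ 2 * u + x * P * (D 1 G * P)"
      by (simp add: algebra_simps power2_eq_square)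
    also have "\<dots> = x * (C * e) ^ 2 * u + P * (- C * (x * D 1 e)) - (x * e) * (- C) * D 1 P"
    proof -
      have g1: "D 1 G * P = - C * D 1 e - G * D 1 P" using dG by (simp add: algebra_simps eq_diff_eq)
      have "x * P * (D 1 G * P) = - C * P * (x * D 1 e) - x * D 1 P * (G * P)"
        unfolding g1 by (simp add: algebra_simps)
      then show ?thesis unfolding GP by (simp add: algebra_simps power2_eq_square)
    qed
    also have "\<dots> = X * C ^ 2 * e * u + P * (- C * (of_nat (n - 1) * e * u))
        - X * (- C) * (of_nat n * e * u * ((A - 1) - 2 * A * X))"
      unfolding de dP Xe by (simp add: power2_eq_square algebra_simps)
    also have "\<dots> = C * e * u * Q"
      unfolding Q_def P_def using assms(8)
      by (simp add: algebra_simps power2_eq_square of_nat_diff)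
    finally show ?thesis .
  qed
  have Qnz: "Q \<noteq> 0"
  proof -
    define c0 where "c0 = - (of_nat m * of_nat (n - 1) :: 'k)"
    define c1 where "c1 = (of_nat n * (1 + a) + of_nat m * (a - 1) :: 'k)"
    define c2 where "c2 = - (of_nat m * a * of_nat (n + 1) :: 'k)"
    have "c0 \<noteq> 0 \<or> c2 \<noteq> 0"
    proof (rule ccontr)
      assume "\<not> (c0 \<noteq> 0 \<or> c2 \<noteq> 0)"
      then have "(of_nat (n - 1) :: 'k) = 0" "(of_nat (n + 1) :: 'k) = 0"
        using mk assms(5) by (auto simp: c0_def c2_def)
      then have "(of_nat (n + 1) :: 'k) - of_nat (n - 1) = 0" by simp
      moreover have "(of_nat (n + 1) :: 'k) - of_nat (n - 1) = of_nat 2"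
        using assms(8) by (simp add: of_nat_diff)
      ultimately have "(of_nat 2 :: 'k) = 0" by simp
      then show False using knat p2 by blast
    qed
    then have "\<iota> c0 + \<iota> c1 * x ^ n + \<iota> c2 * x ^ (2 * n) \<noteq> 0" using tri by blast
    moreover have "\<iota> c0 + \<iota> c1 * x ^ n + \<iota> c2 * x ^ (2 * n) = of_nat m * Q"
    proof -
      have h0: "\<iota> c0 = - (of_nat m * of_nat (n - 1))" by (simp add: c0_def ineg im inat)
      have h1: "\<iota> c1 = of_nat n * (1 + A) + of_nat m * (A - 1)"
        by (simp add: c1_def ia im inat isub i1 A_def)
      have h2: "\<iota> c2 = - (of_nat m * A * of_nat (n + 1))"
        by (simp add: c2_def ineg im inat ia i1 A_def)
      have Ceq: "C = of_nat n * (1 + A) / of_nat m" using Cm mL by (simp add: field_simps)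
      show ?thesis unfolding h0 h1 h2 Q_def X_def Ceq using mL
        by (simp add: field_simps power2_eq_square power_mult)
    qed
    ultimately show ?thesis by auto
  qed
  have "x * P ^ 2 * W = y * u ^ 3 * (C * e * Q)"
  proof -
    have "x * P ^ 2 * W = y * u ^ 2 * (x * P ^ 2 * (G ^ 2 * u + D 1 G))"
      unfolding S4 by (simp add: algebra_simps)
    also have "\<dots> = y * u ^ 2 * (C * e * u * Q)" unfolding S5 ..
    finally show ?thesis by (simp add: algebra_simps power2_eq_square power3_eq_cube)
  qed
  then have Wnz: "W \<noteq> 0" using xnz Pnz ynz unz Cnz enz Qnz by auto
  have LW: "line_wronskian D x y (0, 1, 2) = u * D 2 y - v * D 2 x"
    unfolding line_wronskian_def det3_def using B by (simp add: u_def v_def)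
  have "2 * line_wronskian D x y (0, 1, 2) = W"
    unfolding LW W_def u_def v_def using B by (simp add: algebra_simps)
  then have LWnz: "line_wronskian D x y (0, 1, 2) \<noteq> 0" using Wnz by auto
  show ?thesis
    unfolding classical_wrt_lines_def line_order_seq_def
  proof (rule Least_equality)
    show "(case (0::nat, 1::nat, 2::nat) of (e0, e1, e2) \<Rightarrow> e0 < e1 \<and> e1 < e2) \<and> line_wronskian D x y (0, 1, 2) \<noteq> 0"
      using LWnz by simp
  next
    fix t :: "nat \<times> nat \<times> nat"
    assume "(case t of (e0, e1, e2) \<Rightarrow> e0 < e1 \<and> e1 < e2) \<and> line_wronskian D x y t \<noteq> 0"
    then show "(0, 1, 2) \<le> t" by (cases t) (auto simp: less_eq_prod_def)
  qed
qed

end
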